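(* Let $\sigma$ be a signature and $k$ a natural number; let $\chi_0:=\bot$ and $\chi_k:=\chi\vee\dots\vee\chi$ ($k$ disjuncts) for $k\ge1$. (i) For any generalized causal team $T$ over $\sigma$: $T\models^g\chi_k$ iff $|T/_{\approx}|\leq k$. (ii) For any causal team $T$ over $\sigma$: $T\models^c\chi_k$ iff $|T^-|\leq k$.
   Context: A signature $\sigma=(\mathrm{Dom},\mathrm{Ran})$: $\mathrm{Dom}$ nonempty finite set of variables, each with nonempty finite range $\mathrm{Ran}(X)$; $\mathbf X=\mathbf x$ abbreviates $X_1=x_1\wedge\dots\wedge X_n=x_n$ ($\mathbf x\in\prod\mathrm{Ran}(X_i)$), inconsistent if it contains $X=x,X=x'$ with $x\ne x'$. ${=}(V)$ is the constancy atom; $\bot$ abbreviates $X=x\wedge\neg(X=x)$. With $\mathbf W_V$ listing $\mathrm{Dom}\setminus\{V\}$, $\chi:=\bigwedge_{V\in\mathrm{Dom}}\bigwedge_{\mathbf w\in\mathrm{Ran}(\mathbf W_V)}\big(\mathbf W_V=\mathbf w\;\Box\!\!\rightarrow{=}(V)\big)\wedge\bigwedge_{V\in\mathrm{Dom}}{=}(V)$. Systems of functions $\mathcal F$: for each $V\in\mathrm{En}(\mathcal F)\subseteq\mathrm{Dom}$ parents $PA^{\mathcal F}_V\subseteq\mathrm{Dom}\setminus\{V\}$ and $\mathcal F_V:\mathrm{Ran}(PA^{\mathcal F}_V)\to\mathrm{Ran}(V)$; $\mathrm{Ex}(\mathcal F)=\mathrm{Dom}\setminus\mathrm{En}(\mathcal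 F)$; only recursive (acyclic parent graph). An assignment $s$ is compatible with $\mathcal F$ if $s(V)=\mathcal F_V(s(PA^{\mathcal F}_V))$ for $V\in\mathrm{En}(\mathcal F)$. For consistent $\mathbf X=\mathbf x$: $\mathcal F_{\mathbf X=\mathbf x}$ restricts $\mathcal F$ to $\mathrm{En}(\mathcal F)\setminus\mathbf X$; $s^{\mathcal F}_{\mathbf X=\mathbf x}$: $X_i\mapsto x_i$, $V\mapsto s(V)$ on $\mathrm{Ex}(\mathcal F)\setminus\mathbf X$, $V\mapsto\mathcal F_V(s^{\mathcal F}_{\mathbf X=\mathbf x}(PA^{\mathcal F}_V))$ on $\mathrm{En}(\mathcal F)\setminus\mathbf X$. Causal team $T=(T^-,\mathcal F)$ ($T^-$ a set of compatible assignments; empty team components identified as $\emptyset$); causal subteams $(S^-,\mathcal F)$, $S^-\subseteq T^-$; $T_{\mathbf X=\mathbf x}=(\{s^{\mathcal F}_{\mathbf X=\mathbf x}:s\in T^-\},\mathcal F_{\mathbf X=\mathbf x})$; $\models^c$: $T\models X=x$ iff $s(X)=x$ for all $s\in T^-$; $T\models{=}(V)$ iff $s(V)=s'(V)$ for all $s,s'\in T^-$; $T\models\neg\alpha$ iff $(\{s\},\mathcal F)\not\models\alpha$ for all $s\in T^-$; $\wedge$ classical; $T\models\varphi\vee\psi$ iff causal subteams $T_1,T_2$ exist with $T_1^-\cup T_2^-=T^-$, $T_1\models\varphi$, $T_2\models\psi$; $T\models\mathbf X=\mathbf x\;\Box\!\!\rightarrow\varphi$ iff $\mathbf X=\mathbf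 x$ inconsistent or $T_{\mathbf X=\mathbf x}\models\varphi$. Generalized causal team: a set $T$ of compatible pairs $(s,\mathcal F)$; $T^-=\{s:(s,\mathcal F)\in T\}$; $T_{\mathbf X=\mathbf x}=\{(s^{\mathcal F}_{\mathbf X=\mathbf x},\mathcal F_{\mathbf X=\mathbf x}):(s,\mathcal F)\in T\}$; $\models^g$: same clauses except $T\models\neg\alpha$ iff $\{(s,\mathcal F)\}\not\models\alpha$ for all $(s,\mathcal F)\in T$, and $T\models\varphi\vee\psi$ iff $T=T_1\cup T_2$ with $T_1\models\varphi$, $T_2\models\psi$. $\mathrm{Cn}(\mathcal F)=\{V\in\mathrm{En}(\mathcal F):\mathcal F_V\text{ constant}\}$; $\mathcal F_V\sim\mathcal G_V$ iff $\mathcal F_V(\mathbf x\mathbf y)=\mathcal G_V(\mathbf x\mathbf z)$ for all $\mathbf x\in\mathrm{Ran}(PA^{\mathcal F}_V\cap PA^{\mathcal G}_V)$, $\mathbf y\in\mathrm{Ran}(PA^{\mathcal F}_V\setminus PA^{\mathcal G}_V)$, $\mathbf z\in\mathrm{Ran}(PA^{\mathcal G}_V\setminus PA^{\mathcal F}_V)$; $\mathcal F\sim\mathcal G$ iff $\mathrm{En}(\mathcal F)\setminus\mathrm{Cn}(\mathcal F)=\mathrm{En}(\mathcal G)\setminus\mathrm{Cn}(\mathcal G)$ and $\mathcal F_V\sim\mathcal G_V$ for each such $V$. On pairs, $(s,\mathcal F)\approx(t,\mathcal G)$ iff $s=t$ and $\mathcal F\sim\mathcal G$; $T/_{\approx}$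 is the set of $\approx$-classes of elements of $T$. *)

theory Defs
  imports Main "HOL-Library.FuncSet"
begin

definition signature :: "'v set \<Rightarrow> ('v \<Rightarrow> 'a set) \<Rightarrow> bool" where
  "signature Dom Ran \<longleftrightarrow> finite Dom \<and> Dom \<noteq> {} \<and>
     (\<forall>X\<in>Dom. finite (Ran X) \<and> Ran X \<noteq> {})"

text \<open>Assignments over the signature are the elements of PiE Dom Ran
  (undefined outside Dom).  For a set of variables A, Ran(A) is PiE A Ran.\<close>

record ('v, 'a) sys =
  En :: "'v set"
  PA :: "'v \<Rightarrow> 'v set"
  Fn :: "'v \<Rightarrow> ('v \<Rightarrow> 'a) \<Rightarrow> 'a"

definition parent_rel :: "('v, 'a) sys \<Rightarrow> ('v \<times> 'v) set" where
  "parent_rel F = {(P, V). V \<in> En F \<and> P \<in> PA F V}"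

text \<open>Well-formed recursive system of functions over the signature, represented
  canonically (functions are extensional on their domain; exogenous variables
  carry no data).\<close>

definition wf_sys :: "'v set \<Rightarrow> ('v \<Rightarrow> 'a set) \<Rightarrow> ('v, 'a) sys \<Rightarrow> bool" where
  "wf_sys Dom Ran F \<longleftrightarrow>
     En F \<subseteq> Dom \<and>
     (\<forall>V\<in>En F. PA F V \<subseteq> Dom - {V} \<and> Fn F V \<in> PiE (PiE (PA F V) Ran) (\<lambda>_. Ran V)) \<and>
     (\<forall>V. V \<notin> En F \<longrightarrow> PA F V = {} \<and> Fn F V = undefined) \<and>
     acyclic (parent_rel F)"

definition compatible :: "('v, 'a) sys \<Rightarrow> ('v \<Rightarrow> 'a) \<Rightarrow> bool" where
  "compatible F s \<longleftrightarrow> (\<forall>V\<in>En F. s V = Fn F V (restrict s (PA F V)))"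

text \<open>Antecedents X = x are lists of variable/value pairs.\<close>

definition consistent :: "('v \<times> 'a) list \<Rightarrow> bool" where
  "consistent xs \<longleftrightarrow> (\<forall>(X, x)\<in>set xs. \<forall>(Y, y)\<in>set xs. X = Y \<longrightarrow> x = y)"

definition sys_int :: "('v, 'a) sys \<Rightarrow> ('v \<times> 'a) list \<Rightarrow> ('v, 'a) sys" where
  "sys_int F xs =
     (let E = En F - fst ` set xs in
      F\<lparr>En := E, PA := (\<lambda>V. if V \<in> E then PA F V else {}),
         Fn := (\<lambda>V. if V \<in> E then Fn F V else undefined)\<rparr>)"

text \<open>The intervened assignment s^F_{X=x}, the unique assignment satisfying the
  defining recursive equations (unique by acyclicity).\<close>

definition assign_int :: "'v set \<Rightarrow> ('v, 'a) sys \<Rightarrow> ('v \<times> 'a) list \<Rightarrow> ('v \<Rightarrow> 'a) \<Rightarrow> ('v \<Rightarrow> 'a)" where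
  "assign_int Dom F xs s =
     (THE t. (\<forall>(X, x)\<in>set xs. t X = x) \<and>
             (\<forall>V\<in>Dom - En F - fst ` set xs. t V = s V) \<and>
             (\<forall>V\<in>En F - fst ` set xs. t V = Fn F V (restrict t (PA F V))) \<and>
             (\<forall>V. V \<notin> Dom \<longrightarrow> t V = undefined))"

datatype ('v, 'a) fml =
    Eq 'v 'a
  | Dep 'v
  | Neg "('v, 'a) fml"
  | And "('v, 'a) fml" "('v, 'a) fml"
  | Or "('v, 'a) fml" "('v, 'a) fml"
  | Cf "('v \<times> 'a) list" "('v, 'a) fml"

definition causal_team :: "'v set \<Rightarrow> ('v \<Rightarrow> 'a set) \<Rightarrow> ('v \<Rightarrow> 'a) set \<Rightarrow> ('v, 'a) sys \<Rightarrow> bool" where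
  "causal_team Dom Ran S F \<longleftrightarrow> wf_sys Dom Ran F \<and> S \<subseteq> PiE Dom Ran \<and> (\<forall>s\<in>S. compatible F s)"

fun sat_c :: "'v set \<Rightarrow> ('v \<Rightarrow> 'a) set \<Rightarrow> ('v, 'a) sys \<Rightarrow> ('v, 'a) fml \<Rightarrow> bool" where
  "sat_c Dom S F (Eq X x) \<longleftrightarrow> (\<forall>s\<in>S. s X = x)"
| "sat_c Dom S F (Dep V) \<longleftrightarrow> (\<forall>s\<in>S. \<forall>s'\<in>S. s V = s' V)"
| "sat_c Dom S F (Neg a) \<longleftrightarrow> (\<forall>s\<in>S. \<not> sat_c Dom {s} F a)"
| "sat_c Dom S F (And a b) \<longleftrightarrow> sat_c Dom S F a \<and> sat_c Dom S F b"
| "sat_c Dom S F (Or a b) \<longleftrightarrow>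
     (\<exists>S1 S2. S1 \<subseteq> S \<and> S2 \<subseteq> S \<and> S1 \<union> S2 = S \<and> sat_c Dom S1 F a \<and> sat_c Dom S2 F b)"
| "sat_c Dom S F (Cf xs a) \<longleftrightarrow>
     (\<not> consistent xs \<or> sat_c Dom (assign_int Dom F xs ` S) (sys_int F xs) a)"

definition gen_team :: "'v set \<Rightarrow> ('v \<Rightarrow> 'a set) \<Rightarrow> (('v \<Rightarrow> 'a) \<times> ('v, 'a) sys) set \<Rightarrow> bool" where
  "gen_team Dom Ran T \<longleftrightarrow>
     (\<forall>(s, F)\<in>T. wf_sys Dom Ran F \<and> s \<in> PiE Dom Ran \<and> compatible F s)"

fun sat_g :: "'v set \<Rightarrow> (('v \<Rightarrow> 'a) \<times> ('v, 'a) sys) set \<Rightarrow> ('v, 'a) fml \<Rightarrow> bool" where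
  "sat_g Dom T (Eq X x) \<longleftrightarrow> (\<forall>p\<in>T. fst p X = x)"
| "sat_g Dom T (Dep V) \<longleftrightarrow> (\<forall>p\<in>T. \<forall>q\<in>T. fst p V = fst q V)"
| "sat_g Dom T (Neg a) \<longleftrightarrow> (\<forall>p\<in>T. \<not> sat_g Dom {p} a)"
| "sat_g Dom T (And a b) \<longleftrightarrow> sat_g Dom T a \<and> sat_g Dom T b"
| "sat_g Dom T (Or a b) \<longleftrightarrow> (\<exists>T1 T2. T = T1 \<union> T2 \<and> sat_g Dom T1 a \<and> sat_g Dom T2 b)"
| "sat_g Dom T (Cf xs a) \<longleftrightarrow>
     (\<not> consistent xs \<or>
      sat_g Dom ((\<lambda>(s, F). (assign_int Dom F xs s, sys_int F xs)) ` T) a)"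

definition list_of :: "'b set \<Rightarrow> 'b list" where
  "list_of A = (SOME xs. set xs = A \<and> distinct xs)"

fun conjL :: "('v, 'a) fml list \<Rightarrow> ('v, 'a) fml" where
  "conjL [] = undefined"
| "conjL [a] = a"
| "conjL (a # b # bs) = And a (conjL (b # bs))"

text \<open>Conjunction of a finite nonempty set of formulas (order is irrelevant).\<close>
definition conj_set :: "('v, 'a) fml set \<Rightarrow> ('v, 'a) fml" where
  "conj_set A = conjL (list_of A)"

definition fbot :: "'v set \<Rightarrow> ('v \<Rightarrow> 'a set) \<Rightarrow> ('v, 'a) fml" where
  "fbot Dom Ran =
     (let X = (SOME X. X \<in> Dom); x = (SOME x. x \<in> Ran X) in And (Eq X x) (Neg (Eq X x)))"

text \<open>The antecedent W_V = w, where W_V lists Dom - {V}.\<close>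
definition ante :: "'v set \<Rightarrow> 'v \<Rightarrow> ('v \<Rightarrow> 'a) \<Rightarrow> ('v \<times> 'a) list" where
  "ante Dom V w = map (\<lambda>W. (W, w W)) (list_of (Dom - {V}))"

definition chi :: "'v set \<Rightarrow> ('v \<Rightarrow> 'a set) \<Rightarrow> ('v, 'a) fml" where
  "chi Dom Ran =
     And (conj_set {conj_set {Cf (ante Dom V w) (Dep V) | w. w \<in> PiE (Dom - {V}) Ran} | V. V \<in> Dom})
         (conj_set (Dep ` Dom))"

fun chik :: "'v set \<Rightarrow> ('v \<Rightarrow> 'a set) \<Rightarrow> nat \<Rightarrow> ('v, 'a) fml" where
  "chik Dom Ran 0 = fbot Dom Ran"
| "chik Dom Ran (Suc 0) = chi Dom Ran"
| "chik Dom Ran (Suc (Suc k)) = Or (chi Dom Ran) (chik Dom Ran (Suc k))"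

definition Cn :: "('v \<Rightarrow> 'a set) \<Rightarrow> ('v, 'a) sys \<Rightarrow> 'v set" where
  "Cn Ran F = {V \<in> En F. \<exists>c. \<forall>x\<in>PiE (PA F V) Ran. Fn F V x = c}"

definition merge :: "'v set \<Rightarrow> ('v \<Rightarrow> 'a) \<Rightarrow> ('v \<Rightarrow> 'a) \<Rightarrow> ('v \<Rightarrow> 'a)" where
  "merge A x y = (\<lambda>W. if W \<in> A then x W else y W)"

definition fn_sim :: "('v \<Rightarrow> 'a set) \<Rightarrow> ('v, 'a) sys \<Rightarrow> ('v, 'a) sys \<Rightarrow> 'v \<Rightarrow> bool" where
  "fn_sim Ran F G V \<longleftrightarrow>
     (\<forall>x\<in>PiE (PA F V \<inter> PA G V) Ran. \<forall>y\<in>PiE (PA F V - PA G V) Ran.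
        \<forall>z\<in>PiE (PA G V - PA F V) Ran.
        Fn F V (merge (PA F V \<inter> PA G V) x y) = Fn G V (merge (PA F V \<inter> PA G V) x z))"

definition sys_sim :: "('v \<Rightarrow> 'a set) \<Rightarrow> ('v, 'a) sys \<Rightarrow> ('v, 'a) sys \<Rightarrow> bool" where
  "sys_sim Ran F G \<longleftrightarrow> En F - Cn Ran F = En G - Cn Ran G \<and>
     (\<forall>V\<in>En F - Cn Ran F. fn_sim Ran F G V)"

definition approx_rel :: "('v \<Rightarrow> 'a set) \<Rightarrow> (('v \<Rightarrow> 'a) \<times> ('v, 'a) sys) set
     \<Rightarrow> ((('v \<Rightarrow> 'a) \<times> ('v, 'a) sys) \<times> (('v \<Rightarrow> 'a) \<times> ('v, 'a) sys)) set" where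
  "approx_rel Ran T = {(p, q). p \<in> T \<and> q \<in> T \<and> fst p = fst q \<and> sys_sim Ran (snd p) (snd q)}"

end

theory Submission
  imports Defs
begin

lemma list_of_props: "finite A \<Longrightarrow> set (list_of A) = A \<and> distinct (list_of A)"
  unfolding list_of_def by (rule someI_ex) (rule finite_distinct_list)

lemma sat_g_conjL: "xs \<noteq> [] \<Longrightarrow> sat_g Dom T (conjL xs) \<longleftrightarrow> (\<forall>a\<in>set xs. sat_g Dom T a)"
  by (induction xs rule: conjL.induct) auto

lemma sat_c_conjL: "xs \<noteq> [] \<Longrightarrow> sat_c Dom S F (conjL xs) \<longleftrightarrow> (\<forall>a\<in>set xs. sat_c Dom S F a)"
  by (induction xs rule: conjL.induct) auto

lemma sat_g_conj_set: "finite A \<Longrightarrow> A \<noteq> {} \<Longrightarrow> sat_g Dom T (conj_set A) \<longleftrightarrow> (\<forall>a\<in>A. sat_g Dom T a)"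
  proof -
  assume "finite A" "A \<noteq> {}"
  then have "set (list_of A) = A" using list_of_props by blast
  moreover have "list_of A \<noteq> []" using \<open>A \<noteq> {}\<close> calculation by auto
  ultimately show ?thesis unfolding conj_set_def using sat_g_conjL[of "list_of A"] by simp
qed

lemma sat_c_conj_set: "finite A \<Longrightarrow> A \<noteq> {} \<Longrightarrow> sat_c Dom S F (conj_set A) \<longleftrightarrow> (\<forall>a\<in>A. sat_c Dom S F a)"
  proof -
  assume "finite A" "A \<noteq> {}"
  then have "set (list_of A) = A" using list_of_props by blast
  moreover have "list_of A \<noteq> []" using \<open>A \<noteq> {}\<close> calculation by auto
  ultimately show ?thesis unfolding conj_set_def using sat_c_conjL[of "list_of A"] by simp
qed

lemma sat_g_fbot: "sat_g Dom T (fbot Dom Ran) \<longleftrightarrow> T = {}"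
  unfolding fbot_def Let_def by auto

lemma sat_c_fbot: "sat_c Dom S F (fbot Dom Ran) \<longleftrightarrow> S = {}"
  unfolding fbot_def Let_def by auto

lemma PiE_ne: "signature Dom Ran \<Longrightarrow> A \<subseteq> Dom \<Longrightarrow> PiE A Ran \<noteq> {}"
  unfolding signature_def by (auto simp: PiE_eq_empty_iff)

lemma PiE_fin: "signature Dom Ran \<Longrightarrow> A \<subseteq> Dom \<Longrightarrow> finite (PiE A Ran)"
  unfolding signature_def by (intro finite_PiE) (auto intro: finite_subset)

lemma chi_sets:
  assumes "signature Dom Ran"
  shows "finite {conj_set {Cf (ante Dom V w) (Dep V) | w. w \<in> PiE (Dom - {V}) Ran} | V. V \<in> Dom}"
    "{conj_set {Cf (ante Dom V w) (Dep V) | w. w \<in> PiE (Dom - {V}) Ran} | V. V \<in> Dom} \<noteq> {}"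
    "finite {Cf (ante Dom V w) (Dep V) | w. w \<in> PiE (Dom - {V}) Ran}"
    "V \<in> Dom \<Longrightarrow> {Cf (ante Dom V w) (Dep V) | w. w \<in> PiE (Dom - {V}) Ran} \<noteq> {}"
    "finite (Dep ` Dom)" "Dep ` Dom \<noteq> {}"
proof -
  have fD: "finite Dom" "Dom \<noteq> {}" using assms unfolding signature_def by auto
  have e: "{conj_set {Cf (ante Dom V w) (Dep V) | w. w \<in> PiE (Dom - {V}) Ran} | V. V \<in> Dom}
     = (\<lambda>V. conj_set {Cf (ante Dom V w) (Dep V) | w. w \<in> PiE (Dom - {V}) Ran}) ` Dom" by auto
  show "finite {conj_set {Cf (ante Dom V w) (Dep V) | w. w \<in> PiE (Dom - {V}) Ran} | V. V \<in> Dom}"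
    "{conj_set {Cf (ante Dom V w) (Dep V) | w. w \<in> PiE (Dom - {V}) Ran} | V. V \<in> Dom} \<noteq> {}"
    unfolding e using fD by auto
  have e2: "{Cf (ante Dom V w) (Dep V) | w. w \<in> PiE (Dom - {V}) Ran} = (\<lambda>w. Cf (ante Dom V w) (Dep V)) ` PiE (Dom - {V}) Ran" by auto
  show "finite {Cf (ante Dom V w) (Dep V) | w. w \<in> PiE (Dom - {V}) Ran}"
    unfolding e2 using PiE_fin[OF assms, of "Dom - {V}"] by auto
  show "V \<in> Dom \<Longrightarrow> {Cf (ante Dom V w) (Dep V) | w. w \<in> PiE (Dom - {V}) Ran} \<noteq> {}"
    unfolding e2 using PiE_ne[OF assms, of "Dom - {V}"] by auto
  show "finite (Dep ` Dom)" "Dep ` Dom \<noteq> {}" using fD by auto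
qed

lemma sat_g_chi_raw:
  assumes "signature Dom Ran"
  shows "sat_g Dom T (chi Dom Ran) \<longleftrightarrow>
     (\<forall>V\<in>Dom. \<forall>w\<in>PiE (Dom - {V}) Ran. sat_g Dom T (Cf (ante Dom V w) (Dep V))) \<and>
     (\<forall>V\<in>Dom. \<forall>p\<in>T. \<forall>q\<in>T. fst p V = fst q V)"
proof -
  note cs = chi_sets[OF assms]
  have a: "sat_g Dom T (conj_set (Dep ` Dom)) \<longleftrightarrow> (\<forall>V\<in>Dom. \<forall>p\<in>T. \<forall>q\<in>T. fst p V = fst q V)"
    using sat_g_conj_set[OF cs(5,6)] by simp
  have b: "sat_g Dom T (conj_set {conj_set {Cf (ante Dom V w) (Dep V) | w. w \<in> PiE (Dom - {V}) Ran} | V. V \<in> Dom})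
    \<longleftrightarrow> (\<forall>V\<in>Dom. sat_g Dom T (conj_set {Cf (ante Dom V w) (Dep V) | w. w \<in> PiE (Dom - {V}) Ran}))"
    using sat_g_conj_set[OF cs(1,2)] by blast
  have c: "V \<in> Dom \<Longrightarrow> sat_g Dom T (conj_set {Cf (ante Dom V w) (Dep V) | w. w \<in> PiE (Dom - {V}) Ran})
     \<longleftrightarrow> (\<forall>w\<in>PiE (Dom - {V}) Ran. sat_g Dom T (Cf (ante Dom V w) (Dep V)))" for V
    using sat_g_conj_set[OF cs(3) cs(4), of V] by blast
  have d: "(\<forall>V\<in>Dom. sat_g Dom T (conj_set {Cf (ante Dom V w) (Dep V) | w. w \<in> PiE (Dom - {V}) Ran}))
     \<longleftrightarrow> (\<forall>V\<in>Dom. \<forall>w\<in>PiE (Dom - {V}) Ran. sat_g Dom T (Cf (ante Dom V w) (Dep V)))"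
    by (rule ball_cong[OF refl]) (rule c)
  show ?thesis unfolding chi_def sat_g.simps(4) a b d by (rule refl)
qed

lemma sat_c_chi_raw:
  assumes "signature Dom Ran"
  shows "sat_c Dom S F (chi Dom Ran) \<longleftrightarrow>
     (\<forall>V\<in>Dom. \<forall>w\<in>PiE (Dom - {V}) Ran. sat_c Dom S F (Cf (ante Dom V w) (Dep V))) \<and>
     (\<forall>V\<in>Dom. \<forall>p\<in>S. \<forall>q\<in>S. p V = q V)"
proof -
  note cs = chi_sets[OF assms]
  have a: "sat_c Dom S F (conj_set (Dep ` Dom)) \<longleftrightarrow> (\<forall>V\<in>Dom. \<forall>p\<in>S. \<forall>q\<in>S. p V = q V)"
    using sat_c_conj_set[OF cs(5,6)] by simp
  have b: "sat_c Dom S F (conj_set {conj_set {Cf (ante Dom V w) (Dep V) | w. w \<in> PiE (Dom - {V}) Ran} | V. V \<in> Dom})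
    \<longleftrightarrow> (\<forall>V\<in>Dom. sat_c Dom S F (conj_set {Cf (ante Dom V w) (Dep V) | w. w \<in> PiE (Dom - {V}) Ran}))"
    using sat_c_conj_set[OF cs(1,2)] by blast
  have c: "V \<in> Dom \<Longrightarrow> sat_c Dom S F (conj_set {Cf (ante Dom V w) (Dep V) | w. w \<in> PiE (Dom - {V}) Ran})
     \<longleftrightarrow> (\<forall>w\<in>PiE (Dom - {V}) Ran. sat_c Dom S F (Cf (ante Dom V w) (Dep V)))" for V
    using sat_c_conj_set[OF cs(3) cs(4), of V] by blast
  have d: "(\<forall>V\<in>Dom. sat_c Dom S F (conj_set {Cf (ante Dom V w) (Dep V) | w. w \<in> PiE (Dom - {V}) Ran}))
     \<longleftrightarrow> (\<forall>V\<in>Dom. \<forall>w\<in>PiE (Dom - {V}) Ran. sat_c Dom S F (Cf (ante Dom V w) (Dep V)))"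
    by (rule ball_cong[OF refl]) (rule c)
  show ?thesis unfolding chi_def sat_c.simps(4) a b d by (rule refl)
qed


definition vv :: "('v, 'a) sys \<Rightarrow> ('v \<Rightarrow> 'a) \<Rightarrow> 'v \<Rightarrow> ('v \<Rightarrow> 'a) \<Rightarrow> 'a" where
  "vv F s V w = (if V \<in> En F then Fn F V (restrict w (PA F V)) else s V)"

lemma set_ante: "finite Dom \<Longrightarrow> set (ante Dom V w) = (\<lambda>W. (W, w W)) ` (Dom - {V})"
  unfolding ante_def using list_of_props[of "Dom - {V}"] by simp

lemma consistent_ante: "finite Dom \<Longrightarrow> consistent (ante Dom V w)"
  unfolding consistent_def by (auto simp: set_ante)

lemma fst_set_ante: "finite Dom \<Longrightarrow> fst ` set (ante Dom V w) = Dom - {V}"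
  by (force simp: set_ante)

lemma assign_int_ante:
  assumes wf: "wf_sys Dom Ran F" and fin: "finite Dom" and V: "V \<in> Dom"
  shows "assign_int Dom F (ante Dom V w) s V = vv F s V w"
proof -
  define t0 where "t0 = (\<lambda>X. if X \<in> Dom - {V} then w X else if X = V then vv F s V w else undefined)"
  have PA: "PA F V \<subseteq> Dom - {V}" if "V \<in> En F" using wf that unfolding wf_sys_def by blast
  have En: "En F \<subseteq> Dom" using wf unfolding wf_sys_def by blast
  have rt0: "restrict t0 (PA F V) = restrict w (PA F V)" if "V \<in> En F"
    using PA[OF that] unfolding t0_def restrict_def by (auto simp: fun_eq_iff)
  let ?P = "\<lambda>t. (\<forall>(X, x)\<in>set (ante Dom V w). t X = x) \<and>
             (\<forall>Y\<in>Dom - En F - fst ` set (ante Dom V w). t Y = s Y) \<and>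
             (\<forall>Y\<in>En F - fst ` set (ante Dom V w). t Y = Fn F Y (restrict t (PA F Y))) \<and>
             (\<forall>Y. Y \<notin> Dom \<longrightarrow> t Y = undefined)"
  have t0V: "t0 V = vv F s V w" by (simp add: t0_def)
  have 1: "\<forall>(X, x)\<in>set (ante Dom V w). t0 X = x" unfolding set_ante[OF fin] t0_def by auto
  have 2: "\<forall>Y\<in>Dom - En F - fst ` set (ante Dom V w). t0 Y = s Y"
  proof
    fix Y assume "Y \<in> Dom - En F - fst ` set (ante Dom V w)"
    then have "Y = V" "V \<notin> En F" unfolding fst_set_ante[OF fin] by auto
    then show "t0 Y = s Y" using t0V by (simp add: vv_def)
  qed
  have 3: "\<forall>Y\<in>En F - fst ` set (ante Dom V w). t0 Y = Fn F Y (restrict t0 (PA F Y))"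
  proof
    fix Y assume "Y \<in> En F - fst ` set (ante Dom V w)"
    then have "Y = V" "V \<in> En F" unfolding fst_set_ante[OF fin] using En by auto
    then show "t0 Y = Fn F Y (restrict t0 (PA F Y))" using t0V rt0 by (simp add: vv_def)
  qed
  have 4: "\<forall>Y. Y \<notin> Dom \<longrightarrow> t0 Y = undefined" unfolding t0_def using V by auto
  have "?P t0" using 1 2 3 4 by (intro conjI)
  moreover have "t = t0" if P: "?P t" for t
  proof
    fix X
    have P1: "\<forall>(X, x)\<in>set (ante Dom V w). t X = x" using P by (rule conjunct1)
    have P2: "\<forall>Y\<in>Dom - En F - fst ` set (ante Dom V w). t Y = s Y" using P by (rule conjunct1[OF conjunct2])
    have P3: "\<forall>Y\<in>En F - fst ` set (ante Dom V w). t Y = Fn F Y (restrict t (PA F Y))" using P by (rule conjunct1[OF conjunct2[OF conjunct2]])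
    have P4: "\<forall>Y. Y \<notin> Dom \<longrightarrow> t Y = undefined" using P by (rule conjunct2[OF conjunct2[OF conjunct2]])
    have tw: "t Y = w Y" if "Y \<in> Dom - {V}" for Y
    proof -
      have "(Y, w Y) \<in> set (ante Dom V w)" unfolding set_ante[OF fin] using that by blast
      then show ?thesis using P1 by fastforce
    qed
    have Vn: "V \<notin> fst ` set (ante Dom V w)" unfolding fst_set_ante[OF fin] by blast
    show "t X = t0 X"
    proof (cases "X \<in> Dom - {V}")
      case True
      then show ?thesis using tw unfolding t0_def by simp
    next
      case False
      show ?thesis
      proof (cases "X = V")
        case True
        show ?thesis
        proof (cases "V \<in> En F")
          case True
          have "restrict t (PA F V) = restrict w (PA F V)"
            using PA[OF True] tw unfolding restrict_def by (auto simp: fun_eq_iff)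
          moreover have "t V = Fn F V (restrict t (PA F V))" using P3 True Vn by blast
          ultimately show ?thesis using True \<open>X = V\<close> t0V by (simp add: vv_def)
        next
          case False
          then have "t V = s V" using P2 V Vn by blast
          then show ?thesis using False \<open>X = V\<close> t0V by (simp add: vv_def)
        qed
      next
        case False
        then have "X \<notin> Dom" using \<open>X \<notin> Dom - {V}\<close> by blast
        then show ?thesis using P4 V unfolding t0_def by auto
      qed
    qed
  qed
  ultimately have "assign_int Dom F (ante Dom V w) s = t0"
    unfolding assign_int_def by (rule the_equality)
  then show ?thesis using V by (simp add: t0_def)
qed

lemma sat_g_Cf_ante:
  assumes sig: "signature Dom Ran" and gt: "gen_team Dom Ran T" and V: "V \<in> Dom"
  shows "sat_g Dom T (Cf (ante Dom V w) (Dep V)) \<longleftrightarrow>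
    (\<forall>p\<in>T. \<forall>q\<in>T. vv (snd p) (fst p) V w = vv (snd q) (fst q) V w)"
proof -
  have fin: "finite Dom" using sig unfolding signature_def by blast
  have wf: "p \<in> T \<Longrightarrow> wf_sys Dom Ran (snd p)" for p using gt unfolding gen_team_def by auto
  define f where "f = (\<lambda>(s, F). (assign_int Dom F (ante Dom V w) s, sys_int F (ante Dom V w)))"
  have e: "fst (f p) V = vv (snd p) (fst p) V w" if "p \<in> T" for p
    using assign_int_ante[OF wf[OF that] fin V] by (cases p) (simp add: f_def)
  have "sat_g Dom T (Cf (ante Dom V w) (Dep V)) \<longleftrightarrow> (\<forall>p\<in>T. \<forall>q\<in>T. fst (f p) V = fst (f q) V)"
    unfolding sat_g.simps(6) sat_g.simps(2) f_def[symmetric] using consistent_ante[OF fin, of V w]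
    by blast
  then show ?thesis using e by simp
qed


lemma restrict_in_PiE: "w \<in> PiE B Ran \<Longrightarrow> A \<subseteq> B \<Longrightarrow> restrict w A \<in> PiE A Ran"
  by (auto simp: PiE_def Pi_def)

lemma wf_PA: "wf_sys Dom Ran F \<Longrightarrow> V \<in> En F \<Longrightarrow> PA F V \<subseteq> Dom - {V}"
  unfolding wf_sys_def by blast

lemma wf_Fn: "wf_sys Dom Ran F \<Longrightarrow> V \<in> En F \<Longrightarrow> Fn F V \<in> PiE (PiE (PA F V) Ran) (\<lambda>_. Ran V)"
  unfolding wf_sys_def by blast

lemma wf_En: "wf_sys Dom Ran F \<Longrightarrow> En F \<subseteq> Dom"
  unfolding wf_sys_def by blast

lemma vv_range:
  assumes "wf_sys Dom Ran F" "s \<in> PiE Dom Ran" "V \<in> Dom" "w \<in> PiE (Dom - {V}) Ran"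
  shows "vv F s V w \<in> Ran V"
proof (cases "V \<in> En F")
  case True
  have r: "restrict w (PA F V) \<in> PiE (PA F V) Ran"
    using restrict_in_PiE[OF assms(4) wf_PA[OF assms(1) True]] .
  show ?thesis using PiE_mem[OF wf_Fn[OF assms(1) True] r] True by (simp add: vv_def)
next
  case False
  then show ?thesis using assms by (auto simp: vv_def)
qed

lemma extend_PiE:
  assumes sig: "signature Dom Ran" and "A \<subseteq> B" "B \<subseteq> Dom" "x \<in> PiE A Ran"
  shows "\<exists>w\<in>PiE B Ran. restrict w A = x"
proof -
  define w where "w = (\<lambda>X. if X \<in> A then x X else if X \<in> B then (SOME y. y \<in> Ran X) else undefined)"
  have ne: "X \<in> Dom \<Longrightarrow> Ran X \<noteq> {}" for X using sig unfolding signature_def by blast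
  have "w \<in> PiE B Ran"
  proof (rule PiE_I)
    fix X assume X: "X \<in> B"
    show "w X \<in> Ran X"
    proof (cases "X \<in> A")
      case True then show ?thesis using assms(4) by (auto simp: w_def)
    next
      case False
      have "Ran X \<noteq> {}" using ne X assms(3) by blast
      then show ?thesis using False X by (simp add: w_def some_in_eq)
    qed
  next
    fix X assume "X \<notin> B" then show "w X = undefined" using assms(2) by (auto simp: w_def)
  qed
  moreover have "restrict w A = x"
    using assms(4) by (auto simp: w_def fun_eq_iff PiE_def extensional_def)
  ultimately show ?thesis by blast
qed

lemma vv_const:
  assumes wf: "wf_sys Dom Ran F" and s: "s \<in> PiE Dom Ran" and c: "compatible F s" and V: "V \<in> Dom"
    and nV: "V \<notin> En F - Cn Ran F" and w: "w \<in> PiE (Dom - {V}) Ran"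
  shows "vv F s V w = s V"
proof (cases "V \<in> En F")
  case True
  then have "V \<in> Cn Ran F" using nV by blast
  then obtain k where k: "\<forall>x\<in>PiE (PA F V) Ran. Fn F V x = k" unfolding Cn_def by blast
  have PA: "PA F V \<subseteq> Dom - {V}" using wf_PA[OF wf True] .
  have "restrict s (PA F V) \<in> PiE (PA F V) Ran" using restrict_in_PiE[OF s] PA by blast
  then have "s V = k" using c True k unfolding compatible_def by auto
  moreover have "restrict w (PA F V) \<in> PiE (PA F V) Ran" using restrict_in_PiE[OF w PA] .
  ultimately show ?thesis using k True by (simp add: vv_def)
next
  case False
  then show ?thesis by (simp add: vv_def)
qed

lemma vv_nonconst:
  assumes sig: "signature Dom Ran" and wf: "wf_sys Dom Ran F" and V: "V \<in> En F - Cn Ran F"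
  shows "\<exists>w1\<in>PiE (Dom - {V}) Ran. \<exists>w2\<in>PiE (Dom - {V}) Ran. vv F s V w1 \<noteq> vv F s V w2"
proof -
  have VE: "V \<in> En F" using V by blast
  have PA: "PA F V \<subseteq> Dom - {V}" using wf_PA[OF wf VE] .
  have "PiE (PA F V) Ran \<noteq> {}" using PiE_ne[OF sig] PA by blast
  then obtain x1 where x1: "x1 \<in> PiE (PA F V) Ran" by blast
  have "\<not> (\<forall>x\<in>PiE (PA F V) Ran. Fn F V x = Fn F V x1)" using V unfolding Cn_def by blast
  then obtain x2 where x2: "x2 \<in> PiE (PA F V) Ran" "Fn F V x2 \<noteq> Fn F V x1" by blast
  obtain w1 where w1: "w1 \<in> PiE (Dom - {V}) Ran" "restrict w1 (PA F V) = x1"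
    using extend_PiE[OF sig PA _ x1] by blast
  obtain w2 where w2: "w2 \<in> PiE (Dom - {V}) Ran" "restrict w2 (PA F V) = x2"
    using extend_PiE[OF sig PA _ x2(1)] by blast
  show ?thesis using w1 w2 x2 VE by (auto simp: vv_def)
qed

lemma sim_iff:
  assumes sig: "signature Dom Ran" and wfF: "wf_sys Dom Ran F" and wfG: "wf_sys Dom Ran G"
    and s: "s \<in> PiE Dom Ran" and cF: "compatible F s" and cG: "compatible G s"
  shows "sys_sim Ran F G \<longleftrightarrow> (\<forall>V\<in>Dom. \<forall>w\<in>PiE (Dom - {V}) Ran. vv F s V w = vv G s V w)"
proof
  assume sim: "sys_sim Ran F G"
  show "\<forall>V\<in>Dom. \<forall>w\<in>PiE (Dom - {V}) Ran. vv F s V w = vv G s V w"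
  proof (intro ballI)
    fix V w assume V: "V \<in> Dom" and w: "w \<in> PiE (Dom - {V}) Ran"
    show "vv F s V w = vv G s V w"
    proof (cases "V \<in> En F - Cn Ran F")
      case True
      then have VG: "V \<in> En G - Cn Ran G" and fs: "fn_sim Ran F G V" using sim unfolding sys_sim_def by auto
      have PF: "PA F V \<subseteq> Dom - {V}" using wf_PA[OF wfF] True by blast
      have PG: "PA G V \<subseteq> Dom - {V}" using wf_PA[OF wfG] VG by blast
      let ?A = "PA F V \<inter> PA G V"
      have "Fn F V (merge ?A (restrict w ?A) (restrict w (PA F V - PA G V)))
          = Fn G V (merge ?A (restrict w ?A) (restrict w (PA G V - PA F V)))"
        using fs unfolding fn_sim_def
        using restrict_in_PiE[OF w, of ?A] restrict_in_PiE[OF w, of "PA F V - PA G V"]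
          restrict_in_PiE[OF w, of "PA G V - PA F V"] PF PG by blast
      moreover have "merge ?A (restrict w ?A) (restrict w (PA F V - PA G V)) = restrict w (PA F V)"
        by (auto simp: merge_def fun_eq_iff)
      moreover have "merge ?A (restrict w ?A) (restrict w (PA G V - PA F V)) = restrict w (PA G V)"
        by (auto simp: merge_def fun_eq_iff)
      ultimately show ?thesis using True VG by (simp add: vv_def)
    next
      case False
      then have "V \<notin> En G - Cn Ran G" using sim unfolding sys_sim_def by auto
      then show ?thesis using vv_const[OF wfF s cF V False w] vv_const[OF wfG s cG V _ w] by simp
    qed
  qed
next
  assume eq: "\<forall>V\<in>Dom. \<forall>w\<in>PiE (Dom - {V}) Ran. vv F s V w = vv G s V w"
  have sub: "V \<in> En F2 - Cn Ran F2"
    if h1: "V \<in> En F1 - Cn Ran F1" and h2: "wf_sys Dom Ran F1" and h3: "wf_sys Dom Ran F2"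
      and h4: "compatible F2 s"
      and h5: "\<forall>V\<in>Dom. \<forall>w\<in>PiE (Dom - {V}) Ran. vv F1 s V w = vv F2 s V w" for V F1 F2
  proof (rule ccontr)
    assume n: "V \<notin> En F2 - Cn Ran F2"
    have V: "V \<in> Dom" using h1 wf_En[OF h2] by blast
    obtain w1 w2 where w: "w1 \<in> PiE (Dom - {V}) Ran" "w2 \<in> PiE (Dom - {V}) Ran"
       "vv F1 s V w1 \<noteq> vv F1 s V w2"
      using vv_nonconst[OF sig h2 h1, of s] by blast
    show False using w h5 V vv_const[OF h3 s h4 V n w(1)] vv_const[OF h3 s h4 V n w(2)]
      by auto
  qed
  have eq': "\<forall>V\<in>Dom. \<forall>w\<in>PiE (Dom - {V}) Ran. vv G s V w = vv F s V w" using eq by simp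
  have E: "En F - Cn Ran F = En G - Cn Ran G"
    using sub[OF _ wfF wfG cG eq] sub[OF _ wfG wfF cF eq'] by blast
  have "fn_sim Ran F G V" if V: "V \<in> En F - Cn Ran F" for V
    unfolding fn_sim_def
  proof (intro ballI)
    fix x y z
    let ?A = "PA F V \<inter> PA G V"
    assume x: "x \<in> PiE ?A Ran" and y: "y \<in> PiE (PA F V - PA G V) Ran" and z: "z \<in> PiE (PA G V - PA F V) Ran"
    have VG: "V \<in> En G - Cn Ran G" using E V by blast
    have PF: "PA F V \<subseteq> Dom - {V}" using wf_PA[OF wfF] V by blast
    have PG: "PA G V \<subseteq> Dom - {V}" using wf_PA[OF wfG] VG by blast
    define u where "u = (\<lambda>W. if W \<in> ?A then x W else if W \<in> PA F V - PA G V then y W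
        else if W \<in> PA G V - PA F V then z W else undefined)"
    have u: "u \<in> PiE (PA F V \<union> PA G V) Ran"
      using x y z by (auto simp: u_def PiE_def Pi_def extensional_def)
    obtain w where w: "w \<in> PiE (Dom - {V}) Ran" "restrict w (PA F V \<union> PA G V) = u"
      using extend_PiE[OF sig _ _ u, of "Dom - {V}"] PF PG by blast
    have "restrict w (PA F V) = merge ?A x y"
    proof
      fix W
      have "restrict w (PA F V) W = (if W \<in> PA F V then u W else undefined)"
        using w(2) by (auto simp: fun_eq_iff restrict_def split: if_splits)
      then show "restrict w (PA F V) W = merge ?A x y W"
        using y by (auto simp: u_def merge_def PiE_def extensional_def)
    qed
    moreover have "restrict w (PA G V) = merge ?A x z"
    proof
      fix W
      have "restrict w (PA G V) W = (if W \<in> PA G V then u W else undefined)"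
        using w(2) by (auto simp: fun_eq_iff restrict_def split: if_splits)
      then show "restrict w (PA G V) W = merge ?A x z W"
        using z by (auto simp: u_def merge_def PiE_def extensional_def)
    qed
    moreover have "vv F s V w = vv G s V w" using eq V wf_En[OF wfF] w(1) by blast
    ultimately show "Fn F V (merge ?A x y) = Fn G V (merge ?A x z)"
      using V VG by (simp add: vv_def)
  qed
  then show "sys_sim Ran F G" unfolding sys_sim_def using E by blast
qed


lemma card_key_le1:
  assumes "finite (key ` T)"
  shows "card (key ` T) \<le> Suc 0 \<longleftrightarrow> (\<forall>p\<in>T. \<forall>q\<in>T. key p = key q)"
proof -
  have "card (key ` T) \<le> Suc 0 \<longleftrightarrow> (\<forall>a\<in>key ` T. \<forall>b\<in>key ` T. a = b)"
    by (rule card_le_Suc0_iff_eq[OF assms])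
  also have "\<dots> \<longleftrightarrow> (\<forall>p\<in>T. \<forall>q\<in>T. key p = key q)" by blast
  finally show ?thesis .
qed

lemma generic:
  fixes P :: "'x set \<Rightarrow> nat \<Rightarrow> bool" and key :: "'x \<Rightarrow> 'y" and good :: "'x set \<Rightarrow> bool"
  assumes good_sub: "\<And>T T'. good T \<Longrightarrow> T' \<subseteq> T \<Longrightarrow> good T'"
    and fin: "\<And>T. good T \<Longrightarrow> finite (key ` T)"
    and base: "\<And>T. good T \<Longrightarrow> P T 0 \<longleftrightarrow> (\<forall>p\<in>T. \<forall>q\<in>T. key p = key q)"
    and step: "\<And>T k. good T \<Longrightarrow> P T (Suc k) \<longleftrightarrow> (\<exists>T1 T2. T = T1 \<union> T2 \<and> P T1 0 \<and> P T2 k)"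
  shows "good T \<Longrightarrow> P T k \<longleftrightarrow> card (key ` T) \<le> Suc k"
proof (induction k arbitrary: T)
  case 0
  show ?case using base[OF 0] card_key_le1[OF fin[OF 0]] by simp
next
  case (Suc k)
  show ?case
  proof
    assume "P T (Suc k)"
    then have "\<exists>T1 T2. T = T1 \<union> T2 \<and> P T1 0 \<and> P T2 k" by (rule iffD1[OF step[OF Suc.prems]])
    then obtain T1 T2 where T: "T = T1 \<union> T2" "P T1 0" "P T2 k" by blast
    have s1: "T1 \<subseteq> T" and s2: "T2 \<subseteq> T" using T(1) by blast+
    have g1: "good T1" by (rule good_sub[OF Suc.prems s1])
    have g2: "good T2" by (rule good_sub[OF Suc.prems s2])
    have "card (key ` T1) \<le> Suc 0" using iffD2[OF card_key_le1[OF fin[OF g1]] iffD1[OF base[OF g1] T(2)]] .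
    moreover have "card (key ` T2) \<le> Suc k" using iffD1[OF Suc.IH[OF g2] T(3)] .
    moreover have "card (key ` T) \<le> card (key ` T1) + card (key ` T2)"
      unfolding T(1) image_Un by (rule card_Un_le)
    ultimately show "card (key ` T) \<le> Suc (Suc k)" by linarith
  next
    assume c: "card (key ` T) \<le> Suc (Suc k)"
    show "P T (Suc k)"
    proof (cases "T = {}")
      case True
      have ge: "good {}" by (rule good_sub[OF Suc.prems]) blast
      have "P {} 0" using base[OF ge] by simp
      moreover have "P {} k" using Suc.IH[OF ge] by simp
      ultimately have "\<exists>T1 T2. T = T1 \<union> T2 \<and> P T1 0 \<and> P T2 k" using True by blast
      then show ?thesis by (rule iffD2[OF step[OF Suc.prems]])
    next
      case False
      then obtain p where p: "p \<in> T" by blast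
      define T1 where "T1 = {q\<in>T. key q = key p}"
      define T2 where "T2 = {q\<in>T. key q \<noteq> key p}"
      have g1: "good T1" by (rule good_sub[OF Suc.prems]) (auto simp: T1_def)
      have g2: "good T2" by (rule good_sub[OF Suc.prems]) (auto simp: T2_def)
      have "P T1 0" using base[OF g1] by (simp add: T1_def)
      moreover have "key ` T2 = key ` T - {key p}" by (auto simp: T2_def)
      then have "card (key ` T2) = card (key ` T) - 1"
        using p fin[OF Suc.prems] by (simp add: card_Diff_singleton)
      then have "P T2 k" using Suc.IH[OF g2] c by simp
      moreover have "T = T1 \<union> T2" by (auto simp: T1_def T2_def)
      ultimately have "\<exists>T1 T2. T = T1 \<union> T2 \<and> P T1 0 \<and> P T2 k" by blast
      then show ?thesis by (rule iffD2[OF step[OF Suc.prems]])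
    qed
  qed
qed

definition key :: "'v set \<Rightarrow> ('v \<Rightarrow> 'a set) \<Rightarrow> ('v \<Rightarrow> 'a) \<times> ('v, 'a) sys
    \<Rightarrow> ('v \<Rightarrow> 'a) \<times> ('v \<Rightarrow> ('v \<Rightarrow> 'a) \<Rightarrow> 'a)" where
  "key Dom Ran p = (fst p, \<lambda>V\<in>Dom. \<lambda>w\<in>PiE (Dom - {V}) Ran. vv (snd p) (fst p) V w)"

lemma key_eq:
  "key Dom Ran p = key Dom Ran q \<longleftrightarrow> (fst p = fst q \<and>
     (\<forall>V\<in>Dom. \<forall>w\<in>PiE (Dom - {V}) Ran. vv (snd p) (fst p) V w = vv (snd q) (fst q) V w))"
proof
  assume "key Dom Ran p = key Dom Ran q"
  then have a: "fst p = fst q" and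
    b: "(\<lambda>V\<in>Dom. \<lambda>w\<in>PiE (Dom - {V}) Ran. vv (snd p) (fst p) V w) =
        (\<lambda>V\<in>Dom. \<lambda>w\<in>PiE (Dom - {V}) Ran. vv (snd q) (fst q) V w)" unfolding key_def by auto
  have "vv (snd p) (fst p) V w = vv (snd q) (fst q) V w" if "V \<in> Dom" "w \<in> PiE (Dom - {V}) Ran" for V w
    using fun_cong[OF fun_cong[OF b, of V], of w] that by simp
  then show "fst p = fst q \<and>
     (\<forall>V\<in>Dom. \<forall>w\<in>PiE (Dom - {V}) Ran. vv (snd p) (fst p) V w = vv (snd q) (fst q) V w)" using a by blast
next
  assume "fst p = fst q \<and>
     (\<forall>V\<in>Dom. \<forall>w\<in>PiE (Dom - {V}) Ran. vv (snd p) (fst p) V w = vv (snd q) (fst q) V w)"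
  then show "key Dom Ran p = key Dom Ran q" unfolding key_def
    by (auto intro!: restrict_ext)
qed

lemma gen_team_sub: "gen_team Dom Ran T \<Longrightarrow> T' \<subseteq> T \<Longrightarrow> gen_team Dom Ran T'"
  unfolding gen_team_def by blast

lemma gen_team_D: "gen_team Dom Ran T \<Longrightarrow> p \<in> T \<Longrightarrow>
   wf_sys Dom Ran (snd p) \<and> fst p \<in> PiE Dom Ran \<and> compatible (snd p) (fst p)"
  unfolding gen_team_def by (cases p) auto

lemma approx_key:
  assumes sig: "signature Dom Ran" and gt: "gen_team Dom Ran T"
  shows "approx_rel Ran T = {(p, q). p \<in> T \<and> q \<in> T \<and> key Dom Ran p = key Dom Ran q}"
proof -
  have "sys_sim Ran (snd p) (snd q) \<longleftrightarrow>
     (\<forall>V\<in>Dom. \<forall>w\<in>PiE (Dom - {V}) Ran. vv (snd p) (fst p) V w = vv (snd q) (fst q) V w)"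
    if "p \<in> T" "q \<in> T" "fst p = fst q" for p q
    using sim_iff[OF sig, of "snd p" "snd q" "fst p"] gen_team_D[OF gt that(1)] gen_team_D[OF gt that(2)] that(3)
    by simp
  then show ?thesis unfolding approx_rel_def key_eq by auto
qed

lemma card_quot: "card (T // {(p, q). p \<in> T \<and> q \<in> T \<and> f p = f q}) = card (f ` T)"
proof -
  let ?R = "{(p, q). p \<in> T \<and> q \<in> T \<and> f p = f q}"
  have r: "?R `` {x} = {q\<in>T. f q = f x}" if "x \<in> T" for x using that by auto
  have "T // ?R = (\<lambda>x. ?R `` {x}) ` T" unfolding quotient_def by blast
  also have "\<dots> = (\<lambda>x. {q\<in>T. f q = f x}) ` T" using r by (rule image_cong[OF refl])
  also have "\<dots> = (\<lambda>c. {q\<in>T. f q = c}) ` (f ` T)" by (simp add: image_image)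
  finally have "T // ?R = (\<lambda>c. {q\<in>T. f q = c}) ` (f ` T)" .
  moreover have "inj_on (\<lambda>c. {q\<in>T. f q = c}) (f ` T)"
    by (rule inj_onI) auto
  ultimately show ?thesis by (simp add: card_image)
qed

lemma key_fin:
  assumes sig: "signature Dom Ran" and gt: "gen_team Dom Ran T"
  shows "finite (key Dom Ran ` T)"
proof -
  have fD: "finite Dom" using sig unfolding signature_def by blast
  have "key Dom Ran ` T \<subseteq> PiE Dom Ran \<times> PiE Dom (\<lambda>V. PiE (PiE (Dom - {V}) Ran) (\<lambda>_. Ran V))"
  proof
    fix k assume "k \<in> key Dom Ran ` T"
    then obtain p where p: "p \<in> T" "k = key Dom Ran p" by blast
    note d = gen_team_D[OF gt p(1)]
    show "k \<in> PiE Dom Ran \<times> PiE Dom (\<lambda>V. PiE (PiE (Dom - {V}) Ran) (\<lambda>_. Ran V))"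
      unfolding p(2) key_def using d vv_range[of Dom Ran "snd p" "fst p"] by auto
  qed
  moreover have "finite (PiE Dom Ran \<times> PiE Dom (\<lambda>V. PiE (PiE (Dom - {V}) Ran) (\<lambda>_. Ran V)))"
  proof -
    have "finite (PiE Dom Ran)" using PiE_fin[OF sig] by blast
    moreover have "finite (PiE Dom (\<lambda>V. PiE (PiE (Dom - {V}) Ran) (\<lambda>_. Ran V)))"
    proof (rule finite_PiE[OF fD])
      fix V assume "V \<in> Dom"
      then have "finite (Ran V)" using sig unfolding signature_def by blast
      then show "finite (PiE (PiE (Dom - {V}) Ran) (\<lambda>_. Ran V))"
        using finite_PiE[of "PiE (Dom - {V}) Ran" "\<lambda>_. Ran V"] PiE_fin[OF sig, of "Dom - {V}"] by blast
    qed
    ultimately show ?thesis by blast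
  qed
  ultimately show ?thesis by (rule finite_subset)
qed

lemma chi_g:
  assumes sig: "signature Dom Ran" and gt: "gen_team Dom Ran T"
  shows "sat_g Dom T (chi Dom Ran) \<longleftrightarrow> (\<forall>p\<in>T. \<forall>q\<in>T. key Dom Ran p = key Dom Ran q)"
proof -
  have e1: "(\<forall>V\<in>Dom. \<forall>p\<in>T. \<forall>q\<in>T. fst p V = fst q V) \<longleftrightarrow> (\<forall>p\<in>T. \<forall>q\<in>T. fst p = fst q)"
  proof
    assume h: "\<forall>V\<in>Dom. \<forall>p\<in>T. \<forall>q\<in>T. fst p V = fst q V"
    show "\<forall>p\<in>T. \<forall>q\<in>T. fst p = fst q"
    proof (intro ballI)
      fix p q
      assume pq: "p \<in> T" "q \<in> T"
      show "fst p = fst q"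
      proof (rule PiE_ext[of _ Dom Ran])
        show "fst p \<in> PiE Dom Ran" using gen_team_D[OF gt pq(1)] by (rule conjunct1[OF conjunct2])
        show "fst q \<in> PiE Dom Ran" using gen_team_D[OF gt pq(2)] by (rule conjunct1[OF conjunct2])
        fix i assume i: "i \<in> Dom" show "fst p i = fst q i" using bspec[OF bspec[OF bspec[OF h i] pq(1)] pq(2)] .
      qed
    qed
  next
    assume h: "\<forall>p\<in>T. \<forall>q\<in>T. fst p = fst q"
    show "\<forall>V\<in>Dom. \<forall>p\<in>T. \<forall>q\<in>T. fst p V = fst q V"
    proof (intro ballI)
      fix V p q assume pq: "p \<in> T" "q \<in> T"
      have "fst p = fst q" using bspec[OF bspec[OF h pq(1)] pq(2)] .
      then show "fst p V = fst q V" by (rule arg_cong)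
    qed
  qed
  have e2: "(\<forall>V\<in>Dom. \<forall>w\<in>PiE (Dom - {V}) Ran. sat_g Dom T (Cf (ante Dom V w) (Dep V))) \<longleftrightarrow>
     (\<forall>V\<in>Dom. \<forall>w\<in>PiE (Dom - {V}) Ran. \<forall>p\<in>T. \<forall>q\<in>T. vv (snd p) (fst p) V w = vv (snd q) (fst q) V w)"
  proof (rule ball_cong[OF refl])
    fix V assume V: "V \<in> Dom"
    show "(\<forall>w\<in>PiE (Dom - {V}) Ran. sat_g Dom T (Cf (ante Dom V w) (Dep V))) \<longleftrightarrow>
     (\<forall>w\<in>PiE (Dom - {V}) Ran. \<forall>p\<in>T. \<forall>q\<in>T. vv (snd p) (fst p) V w = vv (snd q) (fst q) V w)"
      by (rule ball_cong[OF refl]) (rule sat_g_Cf_ante[OF sig gt V])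
  qed
  have e3: "((\<forall>V\<in>Dom. \<forall>w\<in>PiE (Dom - {V}) Ran. \<forall>p\<in>T. \<forall>q\<in>T. vv (snd p) (fst p) V w = vv (snd q) (fst q) V w)
      \<and> (\<forall>p\<in>T. \<forall>q\<in>T. fst p = fst q)) \<longleftrightarrow> (\<forall>p\<in>T. \<forall>q\<in>T. key Dom Ran p = key Dom Ran q)"
    unfolding key_eq by blast
  show ?thesis unfolding sat_g_chi_raw[OF sig] e1 e2 e3 by (rule refl)
qed

lemma part_g:
  assumes sig: "signature Dom Ran" and gt: "gen_team Dom Ran T"
  shows "sat_g Dom T (chik Dom Ran k) \<longleftrightarrow> card (T // approx_rel Ran T) \<le> k"
proof -
  have c: "card (T // approx_rel Ran T) = card (key Dom Ran ` T)"
    unfolding approx_key[OF sig gt] by (rule card_quot)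
  show ?thesis
  proof (cases k)
    case 0
    then show ?thesis using c key_fin[OF sig gt] by (simp add: sat_g_fbot)
  next
    case (Suc j)
    have "sat_g Dom T (chik Dom Ran (Suc j)) \<longleftrightarrow> card (key Dom Ran ` T) \<le> Suc j"
    proof (rule generic[where P = "\<lambda>T j. sat_g Dom T (chik Dom Ran (Suc j))" and good = "gen_team Dom Ran"])
      show "gen_team Dom Ran T" by (rule gt)
    next
      fix T T' show "gen_team Dom Ran T \<Longrightarrow> T' \<subseteq> T \<Longrightarrow> gen_team Dom Ran T'" by (rule gen_team_sub)
    next
      fix T show "gen_team Dom Ran T \<Longrightarrow> finite (key Dom Ran ` T)" by (rule key_fin[OF sig])
    next
      fix T show "gen_team Dom Ran T \<Longrightarrow> sat_g Dom T (chik Dom Ran (Suc 0)) \<longleftrightarrow>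
         (\<forall>p\<in>T. \<forall>q\<in>T. key Dom Ran p = key Dom Ran q)" by (simp only: chik.simps chi_g[OF sig])
    next
      fix T k show "gen_team Dom Ran T \<Longrightarrow> sat_g Dom T (chik Dom Ran (Suc (Suc k))) \<longleftrightarrow>
        (\<exists>T1 T2. T = T1 \<union> T2 \<and> sat_g Dom T1 (chik Dom Ran (Suc 0)) \<and> sat_g Dom T2 (chik Dom Ran (Suc k)))"
        by simp
    qed
    then show ?thesis using c Suc by simp
  qed
qed


lemma causal_sub: "causal_team Dom Ran S F \<Longrightarrow> S' \<subseteq> S \<Longrightarrow> causal_team Dom Ran S' F"
  unfolding causal_team_def by blast

lemma causal_fin: "signature Dom Ran \<Longrightarrow> causal_team Dom Ran S F \<Longrightarrow> finite ((\<lambda>x. x) ` S)"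
  unfolding causal_team_def using PiE_fin[of Dom Ran Dom] finite_subset by auto

lemma chi_c:
  assumes sig: "signature Dom Ran" and ct: "causal_team Dom Ran S F"
  shows "sat_c Dom S F (chi Dom Ran) \<longleftrightarrow> (\<forall>p\<in>S. \<forall>q\<in>S. p = q)"
proof
  assume "sat_c Dom S F (chi Dom Ran)"
  then have h: "\<forall>V\<in>Dom. \<forall>p\<in>S. \<forall>q\<in>S. p V = q V" unfolding sat_c_chi_raw[OF sig] by (rule conjunct2)
  have SP: "S \<subseteq> PiE Dom Ran" using ct unfolding causal_team_def by blast
  show "\<forall>p\<in>S. \<forall>q\<in>S. p = q"
  proof (intro ballI)
    fix p q assume pq: "p \<in> S" "q \<in> S"
    show "p = q"
    proof (rule PiE_ext[of _ Dom Ran])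
      show "p \<in> PiE Dom Ran" using SP pq(1) by blast
      show "q \<in> PiE Dom Ran" using SP pq(2) by blast
      fix i assume i: "i \<in> Dom" show "p i = q i" using bspec[OF bspec[OF bspec[OF h i] pq(1)] pq(2)] .
    qed
  qed
next
  assume h: "\<forall>p\<in>S. \<forall>q\<in>S. p = q"
  have A: "sat_c Dom S F (Cf xs (Dep V))" for xs V
  proof -
    have "\<forall>a\<in>assign_int Dom F xs ` S. \<forall>b\<in>assign_int Dom F xs ` S. a V = b V"
    proof (intro ballI)
      fix a b assume "a \<in> assign_int Dom F xs ` S" "b \<in> assign_int Dom F xs ` S"
      then obtain p q where pq: "p \<in> S" "q \<in> S" "a = assign_int Dom F xs p" "b = assign_int Dom F xs q" by blast
      have "p = q" using bspec[OF bspec[OF h pq(1)] pq(2)] .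
      then show "a V = b V" using pq(3,4) by simp
    qed
    then show ?thesis unfolding sat_c.simps(6) sat_c.simps(2) by blast
  qed
  have B: "\<forall>V\<in>Dom. \<forall>p\<in>S. \<forall>q\<in>S. p V = q V"
  proof (intro ballI)
    fix V p q assume pq: "p \<in> S" "q \<in> S"
    have "p = q" using bspec[OF bspec[OF h pq(1)] pq(2)] .
    then show "p V = q V" by simp
  qed
  show "sat_c Dom S F (chi Dom Ran)" unfolding sat_c_chi_raw[OF sig] using A B by blast
qed

lemma part_c:
  assumes sig: "signature Dom Ran" and ct: "causal_team Dom Ran S F"
  shows "sat_c Dom S F (chik Dom Ran k) \<longleftrightarrow> card S \<le> k"
proof (cases k)
  case 0
  have "finite S" using causal_fin[OF sig ct] by simp
  then show ?thesis using 0 by (simp add: sat_c_fbot)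
next
  case (Suc j)
  have "sat_c Dom S F (chik Dom Ran (Suc j)) \<longleftrightarrow> card ((\<lambda>x. x) ` S) \<le> Suc j"
  proof (rule generic[where P = "\<lambda>S j. sat_c Dom S F (chik Dom Ran (Suc j))" and good = "\<lambda>S. causal_team Dom Ran S F"])
    show "causal_team Dom Ran S F" by (rule ct)
  next
    fix T T' show "causal_team Dom Ran T F \<Longrightarrow> T' \<subseteq> T \<Longrightarrow> causal_team Dom Ran T' F" by (rule causal_sub)
  next
    fix T show "causal_team Dom Ran T F \<Longrightarrow> finite ((\<lambda>x. x) ` T)" by (rule causal_fin[OF sig])
  next
    fix T show "causal_team Dom Ran T F \<Longrightarrow> sat_c Dom T F (chik Dom Ran (Suc 0)) \<longleftrightarrow>
       (\<forall>p\<in>T. \<forall>q\<in>T. p = q)" by (simp only: chik.simps chi_c[OF sig])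
  next
    fix T k show "causal_team Dom Ran T F \<Longrightarrow> sat_c Dom T F (chik Dom Ran (Suc (Suc k))) \<longleftrightarrow>
      (\<exists>T1 T2. T = T1 \<union> T2 \<and> sat_c Dom T1 F (chik Dom Ran (Suc 0)) \<and> sat_c Dom T2 F (chik Dom Ran (Suc k)))"
      by (simp only: chik.simps sat_c.simps(5)) blast
  qed
  then show ?thesis using Suc by simp
qed

theorem proposition5p4:
  fixes Dom :: "'v set" and Ran :: "'v \<Rightarrow> 'a set" and k :: nat
  assumes "signature Dom Ran"
  shows "(\<forall>T. gen_team Dom Ran T \<longrightarrow>
            (sat_g Dom T (chik Dom Ran k) \<longleftrightarrow> card (T // approx_rel Ran T) \<le> k))
       \<and> (\<forall>S F. causal_team Dom Ran S F \<longrightarrow>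
            (sat_c Dom S F (chik Dom Ran k) \<longleftrightarrow> card S \<le> k))"
  using part_g[OF assms] part_c[OF assms] by blast

end
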